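(* Let $A\in\mathbb{R}^{n\times n}$, $B\in\mathbb{R}^{n\times m}$, $C\in\mathbb{R}^{m\times n}$, $D\in\mathbb{R}^{m\times m}$ with $D+D^T=0$, and consider the system $\dot x=Ax+Bu$, $y=Cx+Du$. The following two statements are equivalent: (1) There exists a change of basis $x=Tz$ with an invertible $T\in\mathbb{R}^{n\times n}$ such that the resulting realization $(T^{-1}AT,\,T^{-1}B,\,CT,\,D)$ has port-Hamiltonian structure, i.e. there exist $J,R,Q\in\mathbb{R}^{n\times n}$, $F,P\in\mathbb{R}^{n\times m}$, $S,N\in\mathbb{R}^{m\times m}$ with $J=-J^T$, $R=R^T$, $Q=Q^T$ positive definite, $S=S^T$, $N=-N^T$, $\begin{bmatrix}R&P\\P^T&S\end{bmatrix}$ symmetric positive semidefinite, and $T^{-1}AT=(J-R)Q$, $T^{-1}B=F-P$, $CT=(F+P)^TQ$, $D=S+N$. (2) There exists an invertible matrix $T\in\mathbb{R}^{n\times n}$ such that $(TB)^T=CT^{-1}$ and $(TAT^{-1})^T+TAT^{-1}$ is negative semidefinite. *)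

theory Defs
  imports "HOL-Analysis.Analysis"
begin

text \<open>Matrices are HOL-Analysis matrices: a real r x c matrix has type real^'c^'r.\<close>

definition symmetric_mat :: "real^'n^'n \<Rightarrow> bool" where
  "symmetric_mat M \<longleftrightarrow> transpose M = M"

definition skew_mat :: "real^'n^'n \<Rightarrow> bool" where
  "skew_mat M \<longleftrightarrow> transpose M = - M"

definition pos_def_mat :: "real^'n^'n \<Rightarrow> bool" where
  "pos_def_mat M \<longleftrightarrow> (\<forall>x. x \<noteq> 0 \<longrightarrow> x \<bullet> (M *v x) > 0)"

definition pos_semidef_mat :: "real^'n^'n \<Rightarrow> bool" where
  "pos_semidef_mat M \<longleftrightarrow> (\<forall>x. x \<bullet> (M *v x) \<ge> 0)"

definition neg_semidef_mat :: "real^'n^'n \<Rightarrow> bool" where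
  "neg_semidef_mat M \<longleftrightarrow> (\<forall>x. x \<bullet> (M *v x) \<le> 0)"

definition block_mat ::
  "real^'n^'n \<Rightarrow> real^'m^'n \<Rightarrow> real^'n^'m \<Rightarrow> real^'m^'m \<Rightarrow> real^('n + 'm)^('n + 'm)" where
  "block_mat A B C D = (\<chi> i j. case i of
       Inl i' \<Rightarrow> (case j of Inl j' \<Rightarrow> A $ i' $ j' | Inr j' \<Rightarrow> B $ i' $ j')
     | Inr i' \<Rightarrow> (case j of Inl j' \<Rightarrow> C $ i' $ j' | Inr j' \<Rightarrow> D $ i' $ j'))"

end

theory Submission
  imports Defs
begin


lemma qf_sym:
  fixes Q :: "real^'n^'n"
  assumes "transpose Q = Q"
  shows "x \<bullet> (Q *v y) = y \<bullet> (Q *v x)"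
proof -
  have "x \<bullet> (Q *v y) = (x v* Q) \<bullet> y" by (simp add: dot_lmul_matrix)
  also have "\<dots> = (transpose Q *v x) \<bullet> y" by simp
  also have "\<dots> = y \<bullet> (Q *v x)" using assms by (simp add: inner_commute)
  finally show ?thesis .
qed

lemma transpose_mul_col:
  fixes X :: "real^'k^'n" and Y :: "real^'l^'n"
  shows "(transpose X ** Y) $ i $ j = column i X \<bullet> column j Y"
  by (simp add: matrix_matrix_mult_def transpose_def column_def inner_vec_def)

lemma column_mul:
  fixes Q :: "real^'n^'m" and V :: "real^'k^'n"
  shows "column j (Q ** V) = Q *v column j V"
  by (simp add: matrix_matrix_mult_def matrix_vector_mult_def column_def vec_eq_iff)

lemma Qlin:
  fixes Q :: "real^'n^'m"
  shows "Q *v (a - (\<Sum>i\<in>K. c i *\<^sub>R w i)) = Q *v a - (\<Sum>i\<in>K. c i *\<^sub>R (Q *v w i))"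
proof -
  have l: "linear (\<lambda>x. Q *v x)" by simp
  have 1: "Q *v (a - b) = Q *v a - Q *v b" for a b using linear_diff[OF l] .
  have 2: "Q *v (\<Sum>i\<in>K. f i) = (\<Sum>i\<in>K. Q *v f i)" for f
    using linear_sum[OF l, of f K] by (simp add: o_def)
  have 3: "Q *v (r *\<^sub>R b) = r *\<^sub>R (Q *v b)" for r b using linear_scale[OF l] .
  show ?thesis unfolding 1 2 3 ..
qed

lemma gs_exists:
  fixes Q :: "real^'n^'n"
  assumes sym: "transpose Q = Q" and pd: "pos_def_mat Q" and fin: "finite K"
  shows "\<exists>w::'n \<Rightarrow> real^'n. (\<forall>i\<in>K. w i $ i = 1 \<and> (\<forall>j. j \<notin> K \<longrightarrow> w i $ j = 0)) \<and>
            (\<forall>i\<in>K. \<forall>j\<in>K. i \<noteq> j \<longrightarrow> w i \<bullet> (Q *v w j) = 0)"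
  using fin
proof (induction K rule: finite_induct)
  case empty
  show ?case by simp
next
  case (insert k K)
  from insert.IH obtain w where wc: "(\<forall>i\<in>K. w i $ i = 1 \<and> (\<forall>j. j \<notin> K \<longrightarrow> w i $ j = 0)) \<and>
            (\<forall>i\<in>K. \<forall>j\<in>K. i \<noteq> j \<longrightarrow> w i \<bullet> (Q *v w j) = 0)" ..
  have w1: "\<forall>i\<in>K. w i $ i = 1 \<and> (\<forall>j. j \<notin> K \<longrightarrow> w i $ j = 0)" using wc by (rule conjunct1)
  have w2: "\<forall>i\<in>K. \<forall>j\<in>K. i \<noteq> j \<longrightarrow> w i \<bullet> (Q *v w j) = 0" using wc by (rule conjunct2)
  define c where "c i = (w i \<bullet> (Q *v axis k 1)) / (w i \<bullet> (Q *v w i))" for i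
  define v where "v = axis k 1 - (\<Sum>i\<in>K. c i *\<^sub>R w i)"
  define w' where "w' = w(k := v)"
  have pos: "w i \<bullet> (Q *v w i) > 0" if "i \<in> K" for i
  proof -
    have "w i $ i = 1" using w1 that by blast
    have "w i \<noteq> 0"
    proof
      assume "w i = 0"
      then have "w i $ i = 0" by simp
      with \<open>w i $ i = 1\<close> show False by simp
    qed
    then show ?thesis using pd unfolding pos_def_mat_def by blast
  qed
  have vk: "v $ j = (if j = k then 1 else 0)" if "j \<notin> K" for j
    using w1 that by (simp add: v_def axis_def sum_component)
  have orth: "w i \<bullet> (Q *v v) = 0" if "i \<in> K" for i
  proof -
    have "w i \<bullet> (Q *v v) = w i \<bullet> (Q *v axis k 1) - (\<Sum>l\<in>K. c l * (w i \<bullet> (Q *v w l)))"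
      unfolding v_def Qlin by (simp add: inner_diff_right inner_sum_right)
    also have "(\<Sum>l\<in>K. c l * (w i \<bullet> (Q *v w l))) = (\<Sum>l\<in>K. if l = i then c i * (w i \<bullet> (Q *v w i)) else 0)"
      by (rule sum.cong) (use w2 that in simp_all)
    also have "\<dots> = c i * (w i \<bullet> (Q *v w i))" using insert.hyps(1) that by simp
    also have "\<dots> = w i \<bullet> (Q *v axis k 1)" using pos[OF that] by (simp add: c_def)
    finally show ?thesis by simp
  qed
  show ?case
  proof (rule exI[of _ w'], intro conjI ballI allI impI)
    fix i assume i: "i \<in> insert k K"
    show "w' i $ i = 1"
    proof (cases "i = k")
      case True then show ?thesis using vk[of k] insert.hyps(2) by (simp add: w'_def)
    next
      case False then show ?thesis using i w1 by (simp add: w'_def)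
    qed
  next
    fix i j assume i: "i \<in> insert k K" and j: "j \<notin> insert k K"
    have jK: "j \<notin> K" "j \<noteq> k" using j by auto
    show "w' i $ j = 0"
    proof (cases "i = k")
      case True then show ?thesis using vk[OF jK(1)] jK(2) by (simp add: w'_def)
    next
      case False then show ?thesis using i w1 jK by (simp add: w'_def)
    qed
  next
    fix i j assume i: "i \<in> insert k K" and j: "j \<in> insert k K" and ij: "i \<noteq> j"
    show "w' i \<bullet> (Q *v w' j) = 0"
    proof (cases "i = k")
      case True
      then have "j \<in> K" using j ij by simp
      then have "w' j = w j" using insert.hyps(2) by (auto simp: w'_def)
      moreover have "w' i = v" using True by (simp add: w'_def)
      moreover have "v \<bullet> (Q *v w j) = w j \<bullet> (Q *v v)" by (rule qf_sym[OF sym])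
      ultimately show ?thesis using orth[OF \<open>j \<in> K\<close>] by simp
    next
      case False
      then have iK: "i \<in> K" using i by simp
      then have wi: "w' i = w i" using insert.hyps(2) by (auto simp: w'_def)
      show ?thesis
      proof (cases "j = k")
        case True
        then show ?thesis using wi orth[OF iK] by (simp add: w'_def)
      next
        case False
        then have "j \<in> K" using j by simp
        then show ?thesis using wi w2 iK ij False by (simp add: w'_def)
      qed
    qed
  qed
qed


lemma inv_facts:
  fixes A :: "real^'n^'n"
  assumes "invertible A"
  shows "A ** matrix_inv A = mat 1" "matrix_inv A ** A = mat 1"
proof -
  have "\<exists>A'. A ** A' = mat 1 \<and> A' ** A = mat 1" using assms unfolding invertible_def .
  then have "A ** matrix_inv A = mat 1 \<and> matrix_inv A ** A = mat 1"
    unfolding matrix_inv_def by (rule someI_ex)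
  then show "A ** matrix_inv A = mat 1" "matrix_inv A ** A = mat 1" by auto
qed

lemma inv_unique:
  fixes A B :: "real^'n^'n"
  assumes "A ** B = mat 1" "B ** A = mat 1"
  shows "invertible A" "matrix_inv A = B"
proof -
  show iA: "invertible A" using assms unfolding invertible_def by blast
  have "matrix_inv A = matrix_inv A ** (A ** B)" using assms by simp
  also have "\<dots> = (matrix_inv A ** A) ** B" by (simp add: matrix_mul_assoc)
  also have "\<dots> = B" using inv_facts[OF iA] by simp
  finally show "matrix_inv A = B" .
qed

lemma factor:
  fixes Q :: "real^'n^'n"
  assumes sym: "transpose Q = Q" and pd: "pos_def_mat Q"
  shows "\<exists>U::real^'n^'n. invertible U \<and> Q = transpose U ** U"
proof -
  obtain w where wc: "(\<forall>i\<in>UNIV. w i $ i = 1 \<and> (\<forall>j. j \<notin> UNIV \<longrightarrow> w i $ j = 0)) \<and>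
            (\<forall>i\<in>UNIV. \<forall>j\<in>UNIV. i \<noteq> j \<longrightarrow> w i \<bullet> (Q *v w j) = 0)"
    using gs_exists[OF sym pd, of UNIV] by auto
  have w1: "w i $ i = 1" for i using wc by blast
  have w2: "i \<noteq> j \<Longrightarrow> w i \<bullet> (Q *v w j) = 0" for i j using wc by blast
  define d where "d i = w i \<bullet> (Q *v w i)" for i
  have dpos: "d i > 0" for i
  proof -
    have "w i \<noteq> 0"
    proof
      assume "w i = 0"
      then have "w i $ i = 0" by simp
      with w1[of i] show False by simp
    qed
    then show ?thesis using pd unfolding pos_def_mat_def d_def by blast
  qed
  define V :: "real^'n^'n" where "V = (\<chi> a j. w j $ a / sqrt (d j))"
  have colV: "column j V = (1 / sqrt (d j)) *\<^sub>R w j" for j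
    by (simp add: V_def column_def vec_eq_iff)
  have VQV: "transpose V ** (Q ** V) = mat 1"
  proof -
    have "(transpose V ** (Q ** V)) $ i $ j = mat 1 $ i $ j" for i j
    proof -
      have "(transpose V ** (Q ** V)) $ i $ j = column i V \<bullet> (Q *v column j V)"
        by (simp add: transpose_mul_col column_mul)
      also have "\<dots> = (1 / sqrt (d i)) * (1 / sqrt (d j)) * (w i \<bullet> (Q *v w j))"
        by (simp add: colV matrix_vector_mult_scaleR)
      also have "\<dots> = mat 1 $ i $ j"
      proof (cases "i = j")
        case True
        have "sqrt (d i) * sqrt (d i) = d i" using dpos[of i] by simp
        then show ?thesis using True dpos[of i] by (simp add: mat_def d_def[symmetric])
      next
        case False
        then show ?thesis using w2 by (simp add: mat_def)
      qed
      finally show ?thesis .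
    qed
    then show ?thesis by (simp add: vec_eq_iff)
  qed
  have "(transpose V ** Q) ** V = mat 1" using VQV by (simp add: matrix_mul_assoc)
  then have iV: "invertible V" using invertible_left_inverse by blast
  define U where "U = matrix_inv V"
  have VU: "V ** U = mat 1" and UV: "U ** V = mat 1" using inv_facts[OF iV] by (auto simp: U_def)
  have iU: "invertible U" using VU UV unfolding invertible_def by blast
  have tVU: "transpose V ** transpose U = mat 1"
    using UV by (metis matrix_transpose_mul transpose_mat)
  have "Q = (transpose U ** transpose V) ** Q ** (V ** U)"
    using tVU VU matrix_left_right_inverse by (metis matrix_mul_lid matrix_mul_rid)
  also have "\<dots> = transpose U ** (transpose V ** (Q ** V)) ** U"
    by (simp add: matrix_mul_assoc)
  also have "\<dots> = transpose U ** U" using VQV by simp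
  finally have QU: "Q = transpose U ** U" .
  show ?thesis by (rule exI[of _ U], rule conjI, rule iU, rule QU)
qed


lemma tr_add: "transpose (A + B) = transpose A + transpose (B::real^'n^'m)"
  by (simp add: transpose_def vec_eq_iff)
lemma tr_diff: "transpose (A - B) = transpose A - transpose (B::real^'n^'m)"
  by (simp add: transpose_def vec_eq_iff)
lemma tr_neg: "transpose (- A) = - transpose (A::real^'n^'m)"
  by (simp add: transpose_def vec_eq_iff)
lemma tr_zero: "transpose (0::real^'n^'m) = 0"
  by (simp add: transpose_def vec_eq_iff)
lemma mm_diff_r: "(A - B) ** C = A ** C - B ** (C::real^'k^'n)"
  by (simp add: matrix_matrix_mult_def vec_eq_iff sum_subtractf left_diff_distrib)
lemma mm_add_r: "(A + B) ** C = A ** C + B ** (C::real^'k^'n)"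
  by (simp add: matrix_matrix_mult_def vec_eq_iff sum.distrib distrib_right)
lemma mm_diff_l: "C ** (A - B) = C ** A - C ** (B::real^'k^'n)"
  by (simp add: matrix_matrix_mult_def vec_eq_iff sum_subtractf right_diff_distrib)
lemma mm_zero_r: "(A::real^'n^'m) ** (0::real^'k^'n) = 0"
  by (simp add: matrix_matrix_mult_def vec_eq_iff)

lemma quad_conj:
  fixes U M :: "real^'n^'n"
  shows "x \<bullet> ((U ** M ** transpose U) *v x) = (transpose U *v x) \<bullet> (M *v (transpose U *v x))"
proof -
  have "(U ** M ** transpose U) *v x = U *v (M *v (transpose U *v x))"
    by (simp only: matrix_vector_mul_assoc matrix_mul_assoc)
  then have "x \<bullet> ((U ** M ** transpose U) *v x) = (x v* U) \<bullet> (M *v (transpose U *v x))"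
    by (simp only: dot_lmul_matrix)
  then show ?thesis by simp
qed

lemma sum_UNIV_plus:
  fixes g :: "('n::finite) + ('m::finite) \<Rightarrow> real"
  shows "sum g (UNIV::('n + 'm) set) = (\<Sum>i\<in>UNIV. g (Inl i)) + (\<Sum>i\<in>UNIV. g (Inr i))"
proof -
  have "sum g (UNIV::('n + 'm) set) = sum g (UNIV <+> UNIV)" by (simp only: UNIV_Plus_UNIV)
  also have "\<dots> = sum (g \<circ> Inl) UNIV + sum (g \<circ> Inr) UNIV" by (rule sum.Plus) simp_all
  finally show ?thesis by (simp add: o_def)
qed

definition mkv :: "real^'n \<Rightarrow> real^'m \<Rightarrow> real^('n + 'm)" where
  "mkv x y = (\<chi> k. case k of Inl a \<Rightarrow> x $ a | Inr b \<Rightarrow> y $ b)"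

lemma block_quad:
  fixes R :: "real^'n^'n" and P :: "real^'m^'n" and P' :: "real^'n^'m" and S :: "real^'m^'m"
  shows "mkv x y \<bullet> (block_mat R P P' S *v mkv x y) =
     x \<bullet> (R *v x) + x \<bullet> (P *v y) + y \<bullet> (P' *v x) + y \<bullet> (S *v y)"
  by (simp add: mkv_def block_mat_def inner_vec_def matrix_vector_mult_def sum_UNIV_plus
      sum.distrib sum_distrib_left distrib_left)

lemma block_sym:
  fixes R :: "real^'n^'n" and S :: "real^'m^'m"
  assumes "transpose R = R"
  shows "transpose (block_mat R (0::real^'m^'n) (transpose 0) S) = block_mat R 0 (transpose 0) (transpose S)"
  using assms by (auto simp: vec_eq_iff transpose_def block_mat_def split: sum.split)


lemma mv_scaleR: "(c *\<^sub>R A) *v x = c *\<^sub>R ((A::real^'n^'m) *v x)"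
  by (simp add: matrix_vector_mult_def vec_eq_iff sum_distrib_left mult.assoc)
lemma mv_neg: "(- A) *v x = - ((A::real^'n^'m) *v x)"
  by (simp add: matrix_vector_mult_def vec_eq_iff sum_negf)

lemma mkv_surj: "z = mkv (\<chi> i. z $ Inl i) (\<chi> i. z $ Inr i)"
  by (simp add: mkv_def vec_eq_iff split: sum.split)

lemma dir21:
  fixes A :: "real^'n^'n" and B :: "real^'m^'n" and C :: "real^'n^'m" and D :: "real^'m^'m"
  assumes D0: "D + transpose D = 0"
  assumes "\<exists>T :: real^'n^'n. invertible T \<and>
            transpose (T ** B) = C ** matrix_inv T \<and>
            neg_semidef_mat (transpose (T ** A ** matrix_inv T) + T ** A ** matrix_inv T)"
  shows "\<exists>T :: real^'n^'n. invertible T \<and>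
            (\<exists>(J :: real^'n^'n) (R :: real^'n^'n) (Q :: real^'n^'n)
               (F :: real^'m^'n) (P :: real^'m^'n) (S :: real^'m^'m) (N :: real^'m^'m).
               skew_mat J \<and> symmetric_mat R \<and> symmetric_mat Q \<and> pos_def_mat Q \<and>
               symmetric_mat S \<and> skew_mat N \<and>
               symmetric_mat (block_mat R P (transpose P) S) \<and>
               pos_semidef_mat (block_mat R P (transpose P) S) \<and>
               matrix_inv T ** A ** T = (J - R) ** Q \<and>
               matrix_inv T ** B = F - P \<and>
               C ** T = transpose (F + P) ** Q \<and>
               D = S + N)"
proof -
  from assms(2) obtain T :: "real^'n^'n" where iT: "invertible T"
    and h1: "transpose (T ** B) = C ** matrix_inv T"
    and h2: "neg_semidef_mat (transpose (T ** A ** matrix_inv T) + T ** A ** matrix_inv T)"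
    by (elim exE conjE) (rule that; assumption+)
  define Ti where "Ti = matrix_inv T"
  have TTi: "T ** Ti = mat 1" and TiT: "Ti ** T = mat 1" using inv_facts[OF iT] by (auto simp: Ti_def)
  have iTi: "invertible Ti" and TiTi: "matrix_inv Ti = T" using inv_unique[OF TiT TTi] by auto
  define M where "M = T ** A ** Ti"
  define J where "J = (1/2::real) *\<^sub>R (M - transpose M)"
  define R where "R = (-1/2::real) *\<^sub>R (transpose M + M)"
  have f1: "skew_mat J" unfolding skew_mat_def J_def
    by (simp add: vec_eq_iff transpose_def algebra_simps)
  have f2: "symmetric_mat R" unfolding symmetric_mat_def R_def
    by (simp add: vec_eq_iff transpose_def algebra_simps)
  have f3: "symmetric_mat (mat 1 :: real^'n^'n)" unfolding symmetric_mat_def by simp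
  have f4: "pos_def_mat (mat 1 :: real^'n^'n)" unfolding pos_def_mat_def by simp
  have f5: "symmetric_mat (0::real^'m^'m)" unfolding symmetric_mat_def by (rule tr_zero)
  have f6: "skew_mat D" unfolding skew_mat_def using D0 by (simp add: eq_neg_iff_add_eq_0 add.commute)
  have f7: "symmetric_mat (block_mat R (0::real^'m^'n) (transpose 0) (0::real^'m^'m))"
    unfolding symmetric_mat_def using block_sym[of R 0] f2 tr_zero unfolding symmetric_mat_def by metis
  have Rpsd: "x \<bullet> (R *v x) \<ge> 0" for x
  proof -
    have "x \<bullet> ((transpose M + M) *v x) \<le> 0" using h2 unfolding neg_semidef_mat_def M_def Ti_def by blast
    then show ?thesis by (simp add: R_def mv_scaleR mv_neg)
  qed
  have f8: "pos_semidef_mat (block_mat R (0::real^'m^'n) (transpose 0) (0::real^'m^'m))"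
    unfolding pos_semidef_mat_def
  proof
    fix z :: "real^('n + 'm)"
    have "z \<bullet> (block_mat R (0::real^'m^'n) (transpose 0) (0::real^'m^'m) *v z)
        = (\<chi> i. z $ Inl i) \<bullet> (R *v (\<chi> i. z $ Inl i))"
      using block_quad[of "\<chi> i. z $ Inl i" "\<chi> i. z $ Inr i" R 0 "transpose 0" 0]
      by (simp add: tr_zero flip: mkv_surj)
    then show "z \<bullet> (block_mat R (0::real^'m^'n) (transpose 0) (0::real^'m^'m) *v z) \<ge> 0"
      using Rpsd by simp
  qed
  have f9: "matrix_inv Ti ** A ** Ti = (J - R) ** mat 1"
  proof -
    have "J - R = M" by (simp add: J_def R_def vec_eq_iff algebra_simps)
    then show ?thesis by (simp add: TiTi M_def)
  qed
  have f10: "matrix_inv Ti ** B = T ** B - 0" by (simp add: TiTi)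
  have f11: "C ** Ti = transpose (T ** B + 0) ** mat 1" using h1 by (simp add: Ti_def)
  have f12: "D = 0 + D" by simp
  show ?thesis
    apply (rule exI[of _ Ti], rule conjI, rule iTi)
    apply (rule exI[of _ J], rule exI[of _ R], rule exI[of _ "mat 1"], rule exI[of _ "T ** B"],
        rule exI[of _ "0::real^'m^'n"], rule exI[of _ "0::real^'m^'m"], rule exI[of _ D])
    using f1 f2 f3 f4 f5 f6 f7 f8 f9 f10 f11 f12 by (intro conjI) assumption+
qed


lemma quad_nonneg_zero:
  fixes a b :: real
  assumes "a \<ge> 0" and "\<And>t. t * t * a + 2 * t * b \<ge> 0"
  shows "b = 0"
proof -
  define s where "s = a + 1"
  have s: "s > 0" using assms(1) by (simp add: s_def)
  have "(- b / s) * (- b / s) * a + 2 * (- b / s) * b \<ge> 0" by (rule assms(2))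
  then have "((- b / s) * (- b / s) * a + 2 * (- b / s) * b) * (s * s) \<ge> 0" using s by simp
  moreover have "((- b / s) * (- b / s) * a + 2 * (- b / s) * b) * (s * s) = b * b * a - 2 * b * b * s"
    using s by (simp add: field_simps)
  ultimately have "b * b * a - 2 * b * b * s \<ge> 0" by simp
  then have "b * b * (a - 2 * s) \<ge> 0" by (simp add: algebra_simps)
  moreover have "a - 2 * s < 0" using assms(1) by (simp add: s_def)
  ultimately have "b * b \<le> 0" by (simp add: mult_le_0_iff zero_le_mult_iff)
  then show "b = 0" by (metis mult_eq_0_iff mult_le_0_iff order_antisym zero_le_square)
qed

lemma dir12:
  fixes A :: "real^'n^'n" and B :: "real^'m^'n" and C :: "real^'n^'m" and D :: "real^'m^'m"
  assumes D0: "D + transpose D = 0"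
  assumes "\<exists>T :: real^'n^'n. invertible T \<and>
            (\<exists>(J :: real^'n^'n) (R :: real^'n^'n) (Q :: real^'n^'n)
               (F :: real^'m^'n) (P :: real^'m^'n) (S :: real^'m^'m) (N :: real^'m^'m).
               skew_mat J \<and> symmetric_mat R \<and> symmetric_mat Q \<and> pos_def_mat Q \<and>
               symmetric_mat S \<and> skew_mat N \<and>
               symmetric_mat (block_mat R P (transpose P) S) \<and>
               pos_semidef_mat (block_mat R P (transpose P) S) \<and>
               matrix_inv T ** A ** T = (J - R) ** Q \<and>
               matrix_inv T ** B = F - P \<and>
               C ** T = transpose (F + P) ** Q \<and>
               D = S + N)"
  shows "\<exists>T :: real^'n^'n. invertible T \<and>
            transpose (T ** B) = C ** matrix_inv T \<and>
            neg_semidef_mat (transpose (T ** A ** matrix_inv T) + T ** A ** matrix_inv T)"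
proof -
  from assms(2) obtain T J R Q :: "real^'n^'n" and F P :: "real^'m^'n" and S N :: "real^'m^'m"
    where iT: "invertible T" and hJ: "skew_mat J" and hR: "symmetric_mat R" and hQ: "symmetric_mat Q"
      and hQp: "pos_def_mat Q" and hS: "symmetric_mat S" and hN: "skew_mat N"
      and hBs: "symmetric_mat (block_mat R P (transpose P) S)"
      and hBp: "pos_semidef_mat (block_mat R P (transpose P) S)"
      and eA: "matrix_inv T ** A ** T = (J - R) ** Q"
      and eB: "matrix_inv T ** B = F - P"
      and eC: "C ** T = transpose (F + P) ** Q"
      and eD: "D = S + N"
    by (elim exE conjE) (rule that; assumption+)
  define Ti where "Ti = matrix_inv T"
  have TTi: "T ** Ti = mat 1" and TiT: "Ti ** T = mat 1" using inv_facts[OF iT] by (auto simp: Ti_def)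
  have S0: "S = 0"
  proof -
    have "transpose D = S - N" using hS hN eD
      by (simp add: tr_add symmetric_mat_def skew_mat_def)
    then have "S + N + (S - N) = 0" using D0 eD by simp
    then have "\<And>i j. (S + N + (S - N)) $ i $ j = 0" by simp
    then have "\<And>i j. S $ i $ j = 0" by simp
    then show ?thesis by (simp add: vec_eq_iff)
  qed
  have blk: "mkv x y \<bullet> (block_mat R P (transpose P) S *v mkv x y) \<ge> 0" for x y
    using hBp unfolding pos_semidef_mat_def by blast
  have blk2: "mkv x y \<bullet> (block_mat R P (transpose P) S *v mkv x y) =
      x \<bullet> (R *v x) + 2 * (x \<bullet> (P *v y))" for x y
  proof -
    have "y \<bullet> (transpose P *v x) = (x v* P) \<bullet> y" by (simp add: inner_commute)
    also have "\<dots> = x \<bullet> (P *v y)" by (rule dot_lmul_matrix)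
    finally have "y \<bullet> (transpose P *v x) = x \<bullet> (P *v y)" .
    then show ?thesis using block_quad[of x y R P "transpose P" S] by (simp add: S0)
  qed
  have Rpsd: "x \<bullet> (R *v x) \<ge> 0" for x
    using blk[of x 0] blk2[of x 0] by simp
  have Pxy: "x \<bullet> (P *v y) = 0" for x y
  proof (rule quad_nonneg_zero[OF Rpsd])
    fix t :: real
    have "0 \<le> (t *\<^sub>R x) \<bullet> (R *v (t *\<^sub>R x)) + 2 * ((t *\<^sub>R x) \<bullet> (P *v y))"
      using blk[of "t *\<^sub>R x" y] blk2[of "t *\<^sub>R x" y] by simp
    then show "0 \<le> t * t * (x \<bullet> (R *v x)) + 2 * t * (x \<bullet> (P *v y))"
      by (simp add: matrix_vector_mult_scaleR algebra_simps)
  qed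
  have P0: "P = 0"
  proof -
    have "P $ i $ j = 0" for i j
    proof -
      have "P $ i $ j = axis i 1 \<bullet> (P *v axis j 1)"
        by (simp add: matrix_vector_mult_basis inner_axis' column_def)
      then show ?thesis using Pxy by simp
    qed
    then show ?thesis by (simp add: vec_eq_iff)
  qed
  obtain U :: "real^'n^'n" where iU: "invertible U" and QU: "Q = transpose U ** U"
    using factor[of Q] hQ hQp unfolding symmetric_mat_def by blast
  define Ui where "Ui = matrix_inv U"
  have UUi: "U ** Ui = mat 1" and UiU: "Ui ** U = mat 1" using inv_facts[OF iU] by (auto simp: Ui_def)
  define T' where "T' = U ** Ti"
  have a1: "T' ** (T ** Ui) = mat 1"
  proof -
    have "T' ** (T ** Ui) = U ** ((Ti ** T) ** Ui)" by (simp only: T'_def matrix_mul_assoc)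
    then show ?thesis by (simp add: TiT UUi)
  qed
  have a2: "(T ** Ui) ** T' = mat 1"
  proof -
    have "(T ** Ui) ** T' = T ** ((Ui ** U) ** Ti)" by (simp only: T'_def matrix_mul_assoc)
    then show ?thesis by (simp add: UiU TTi)
  qed
  have iT': "invertible T'" and T'i: "matrix_inv T' = T ** Ui" using inv_unique[OF a1 a2] by auto
  have QUi: "Q ** Ui = transpose U"
  proof -
    have "Q ** Ui = transpose U ** (U ** Ui)" by (simp only: QU matrix_mul_assoc)
    then show ?thesis by (simp add: UUi)
  qed
  have g1: "transpose (T' ** B) = C ** matrix_inv T'"
  proof -
    have "T' ** B = U ** (Ti ** B)" by (simp only: T'_def matrix_mul_assoc)
    also have "\<dots> = U ** F" using eB P0 by (simp add: Ti_def)
    finally have l: "T' ** B = U ** F" .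
    have "C ** matrix_inv T' = (C ** T) ** Ui" by (simp only: T'i matrix_mul_assoc)
    also have "\<dots> = transpose F ** (Q ** Ui)" using eC P0 by (simp add: matrix_mul_assoc)
    also have "\<dots> = transpose F ** transpose U" by (simp add: QUi)
    finally show ?thesis using l by (simp add: matrix_transpose_mul)
  qed
  define M where "M = T' ** A ** matrix_inv T'"
  have Meq: "M = U ** (J - R) ** transpose U"
  proof -
    have "M = U ** (Ti ** A ** T) ** Ui" unfolding M_def T'i unfolding T'_def by (simp only: matrix_mul_assoc)
    also have "\<dots> = U ** (J - R) ** (Q ** Ui)" using eA by (simp add: Ti_def matrix_mul_assoc)
    also have "\<dots> = U ** (J - R) ** transpose U" by (simp add: QUi)
    finally show ?thesis .
  qed
  have MT: "transpose M = U ** (- J - R) ** transpose U"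
  proof -
    have "transpose (J - R) = - J - R" using hJ hR by (simp add: tr_diff symmetric_mat_def skew_mat_def)
    then show ?thesis by (simp add: Meq matrix_transpose_mul matrix_mul_assoc)
  qed
  have g2: "neg_semidef_mat (transpose M + M)"
    unfolding neg_semidef_mat_def
  proof
    fix x :: "real^'n"
    define y where "y = transpose U *v x"
    have "x \<bullet> ((transpose M + M) *v x) = x \<bullet> (transpose M *v x) + x \<bullet> (M *v x)"
      by (simp add: matrix_vector_mult_add_rdistrib inner_add_right)
    also have "\<dots> = y \<bullet> ((- J - R) *v y) + y \<bullet> ((J - R) *v y)"
      unfolding MT unfolding Meq unfolding quad_conj y_def ..
    also have "\<dots> = - 2 * (y \<bullet> (R *v y))"
      by (simp add: matrix_vector_mult_diff_rdistrib mv_neg inner_diff_right)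
    finally show "x \<bullet> ((transpose M + M) *v x) \<le> 0" using Rpsd[of y] by simp
  qed
  show ?thesis using iT' g1 g2 unfolding M_def by blast
qed


theorem corollary3p1:
  fixes A :: "real^'n^'n" and B :: "real^'m^'n" and C :: "real^'n^'m" and D :: "real^'m^'m"
  assumes "D + transpose D = 0"
  shows "(\<exists>T :: real^'n^'n. invertible T \<and>
            (\<exists>(J :: real^'n^'n) (R :: real^'n^'n) (Q :: real^'n^'n)
               (F :: real^'m^'n) (P :: real^'m^'n) (S :: real^'m^'m) (N :: real^'m^'m).
               skew_mat J \<and> symmetric_mat R \<and> symmetric_mat Q \<and> pos_def_mat Q \<and>
               symmetric_mat S \<and> skew_mat N \<and>
               symmetric_mat (block_mat R P (transpose P) S) \<and>
               pos_semidef_mat (block_mat R P (transpose P) S) \<and>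
               matrix_inv T ** A ** T = (J - R) ** Q \<and>
               matrix_inv T ** B = F - P \<and>
               C ** T = transpose (F + P) ** Q \<and>
               D = S + N))
     \<longleftrightarrow>
         (\<exists>T :: real^'n^'n. invertible T \<and>
            transpose (T ** B) = C ** matrix_inv T \<and>
            neg_semidef_mat (transpose (T ** A ** matrix_inv T) + T ** A ** matrix_inv T))"
  by (rule iffI) (erule dir12[OF assms], erule dir21[OF assms])

end
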